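(* Let $R$ be a commutative Noetherian ring, $M$ a finitely generated $R$-module, and $X \subseteq \mathrm{Spec}(R)$ a basic set. For any subset $S \subseteq M$ there exists a finite set of primes $\Lambda \subseteq X$ such that for every $\mathfrak{p} \in X \setminus \Lambda$ there exists $\mathfrak{q} \in \Lambda$ with $\mathfrak{q} \subsetneq \mathfrak{p}$ and $\delta_\mathfrak{p}(S,M) = \delta_\mathfrak{q}(S,M)$.
   Context: A subset $X \subseteq \mathrm{Spec}(R)$ is basic if, whenever the intersection of a family of primes in $X$ is a prime ideal, that intersection belongs to $X$. For $S \subseteq M$ let $\langle S \rangle$ be the $R$-submodule generated by $S$. For a prime $\mathfrak{p}$, $\delta_\mathfrak{p}(S,M)$ is the largest integer $n \ge 0$ such that there is a free $R_\mathfrak{p}$-submodule $G \subseteq \langle S\rangle_\mathfrak{p}$ of rank $n$ which is a direct summand of $M_\mathfrak{p}$. *)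

theory Defs
  imports Complex_Main
begin

text \<open>The ring R is the whole type 'a (class comm_ring_1); the R-module M is the whole
type 'm with scalar multiplication scale, satisfying the library locale module.\<close>

definition ring_ideal :: "'a::comm_ring_1 set \<Rightarrow> bool" where
  "ring_ideal I \<longleftrightarrow> 0 \<in> I \<and> (\<forall>x\<in>I. \<forall>y\<in>I. x + y \<in> I) \<and> (\<forall>r. \<forall>x\<in>I. r * x \<in> I)"

definition prime_ideal :: "'a::comm_ring_1 set \<Rightarrow> bool" where
  "prime_ideal P \<longleftrightarrow> ring_ideal P \<and> 1 \<notin> P \<and> (\<forall>a b. a * b \<in> P \<longrightarrow> a \<in> P \<or> b \<in> P)"

definition Spec :: "'a::comm_ring_1 set set" where
  "Spec = {P. prime_ideal P}"

definition noetherian_ring :: "'a::comm_ring_1 itself \<Rightarrow> bool" where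
  "noetherian_ring _ \<longleftrightarrow>
     (\<forall>I :: nat \<Rightarrow> 'a set. (\<forall>n. ring_ideal (I n)) \<and> (\<forall>n. I n \<subseteq> I (Suc n))
        \<longrightarrow> (\<exists>N. \<forall>n\<ge>N. I n = I N))"

definition finitely_generated :: "('a::comm_ring_1 \<Rightarrow> 'm::ab_group_add \<Rightarrow> 'm) \<Rightarrow> bool" where
  "finitely_generated scale \<longleftrightarrow> (\<exists>F. finite F \<and> module.span scale F = UNIV)"

definition basic :: "'a::comm_ring_1 set set \<Rightarrow> bool" where
  "basic X \<longleftrightarrow> X \<subseteq> Spec \<and>
     (\<forall>F. F \<subseteq> X \<and> F \<noteq> {} \<and> prime_ideal (\<Inter>F) \<longrightarrow> \<Inter>F \<in> X)"

text \<open>Elements of the localization N_p (for an R-module N with scalar action scale) are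
equivalence classes of pairs (m,u) with u not in p, where (m,u) ~ (m',u') iff
t (u' m - u m') = 0 for some t not in p.  R_p is the case scale = (*).\<close>

definition lcls :: "('a::comm_ring_1 \<Rightarrow> 'b::ab_group_add \<Rightarrow> 'b) \<Rightarrow> 'a set \<Rightarrow> 'b \<Rightarrow> 'a \<Rightarrow> ('b \<times> 'a) set" where
  "lcls scale p m u = {(m', u'). u' \<notin> p \<and> (\<exists>t. t \<notin> p \<and> scale t (scale u' m - scale u m') = 0)}"

text \<open>The localization of the submodule N at p, viewed inside M_p.\<close>
definition locset :: "('a::comm_ring_1 \<Rightarrow> 'b::ab_group_add \<Rightarrow> 'b) \<Rightarrow> 'a set \<Rightarrow> 'b set \<Rightarrow> ('b \<times> 'a) set set" where
  "locset scale p N = {lcls scale p m u | m u. m \<in> N \<and> u \<notin> p}"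

definition lrep :: "('b \<times> 'a) set \<Rightarrow> 'b \<times> 'a" where
  "lrep x = (SOME r. r \<in> x)"

definition loc_zero :: "('a::comm_ring_1 \<Rightarrow> 'b::ab_group_add \<Rightarrow> 'b) \<Rightarrow> 'a set \<Rightarrow> ('b \<times> 'a) set" where
  "loc_zero scale p = lcls scale p 0 1"

definition loc_add :: "('a::comm_ring_1 \<Rightarrow> 'b::ab_group_add \<Rightarrow> 'b) \<Rightarrow> 'a set \<Rightarrow>
    ('b \<times> 'a) set \<Rightarrow> ('b \<times> 'a) set \<Rightarrow> ('b \<times> 'a) set" where
  "loc_add scale p x y =
     (case lrep x of (m, u) \<Rightarrow> case lrep y of (m', u') \<Rightarrow>
        lcls scale p (scale u' m + scale u m') (u * u'))"

definition loc_smult :: "('a::comm_ring_1 \<Rightarrow> 'b::ab_group_add \<Rightarrow> 'b) \<Rightarrow> 'a set \<Rightarrow>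
    ('a \<times> 'a) set \<Rightarrow> ('b \<times> 'a) set \<Rightarrow> ('b \<times> 'a) set" where
  "loc_smult scale p a x =
     (case lrep a of (r, v) \<Rightarrow> case lrep x of (m, u) \<Rightarrow> lcls scale p (scale r m) (v * u))"

fun loc_lsum :: "('a::comm_ring_1 \<Rightarrow> 'b::ab_group_add \<Rightarrow> 'b) \<Rightarrow> 'a set \<Rightarrow>
    (nat \<Rightarrow> ('a \<times> 'a) set) \<Rightarrow> (nat \<Rightarrow> ('b \<times> 'a) set) \<Rightarrow> nat \<Rightarrow> ('b \<times> 'a) set" where
  "loc_lsum scale p a g 0 = loc_zero scale p"
| "loc_lsum scale p a g (Suc n) = loc_add scale p (loc_lsum scale p a g n) (loc_smult scale p (a n) (g n))"

definition loc_submodule :: "('a::comm_ring_1 \<Rightarrow> 'b::ab_group_add \<Rightarrow> 'b) \<Rightarrow> 'a set \<Rightarrow> ('b \<times> 'a) set set \<Rightarrow> bool" where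
  "loc_submodule scale p H \<longleftrightarrow> H \<subseteq> locset scale p UNIV \<and> loc_zero scale p \<in> H \<and>
     (\<forall>x\<in>H. \<forall>y\<in>H. loc_add scale p x y \<in> H) \<and>
     (\<forall>a\<in>locset (*) p UNIV. \<forall>x\<in>H. loc_smult scale p a x \<in> H)"

definition loc_free_rank :: "('a::comm_ring_1 \<Rightarrow> 'b::ab_group_add \<Rightarrow> 'b) \<Rightarrow> 'a set \<Rightarrow> ('b \<times> 'a) set set \<Rightarrow> nat \<Rightarrow> bool" where
  "loc_free_rank scale p G n \<longleftrightarrow>
     (\<exists>g. (\<forall>i<n. g i \<in> locset scale p UNIV) \<and>
          G = {loc_lsum scale p a g n | a. \<forall>i<n. a i \<in> locset (*) p UNIV} \<and>
          (\<forall>a. (\<forall>i<n. a i \<in> locset (*) p UNIV) \<and> loc_lsum scale p a g n = loc_zero scale p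
               \<longrightarrow> (\<forall>i<n. a i = loc_zero (*) p)))"

definition loc_direct_summand :: "('a::comm_ring_1 \<Rightarrow> 'b::ab_group_add \<Rightarrow> 'b) \<Rightarrow> 'a set \<Rightarrow> ('b \<times> 'a) set set \<Rightarrow> bool" where
  "loc_direct_summand scale p G \<longleftrightarrow>
     loc_submodule scale p G \<and>
     (\<exists>H. loc_submodule scale p H \<and> G \<inter> H = {loc_zero scale p} \<and>
          (\<forall>x\<in>locset scale p UNIV. \<exists>g\<in>G. \<exists>h\<in>H. x = loc_add scale p g h))"

definition delta :: "('a::comm_ring_1 \<Rightarrow> 'm::ab_group_add \<Rightarrow> 'm) \<Rightarrow> 'a set \<Rightarrow> 'm set \<Rightarrow> nat" where
  "delta scale p S = (GREATEST n. \<exists>G. loc_free_rank scale p G n \<and>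
       G \<subseteq> locset scale p (module.span scale S) \<and> loc_direct_summand scale p G)"

end

theory Submission
  imports Defs
begin
section \<open>Prime ideal basics\<close>

lemma pi_ideal: "prime_ideal p \<Longrightarrow> ring_ideal p" by (simp add: prime_ideal_def)
lemma pi_0: "prime_ideal p \<Longrightarrow> 0 \<in> p" by (simp add: prime_ideal_def ring_ideal_def)
lemma pi_1: "prime_ideal p \<Longrightarrow> 1 \<notin> p" by (simp add: prime_ideal_def)
lemma pi_add: "prime_ideal p \<Longrightarrow> x \<in> p \<Longrightarrow> y \<in> p \<Longrightarrow> x + y \<in> p"
  by (simp add: prime_ideal_def ring_ideal_def)
lemma pi_mult: "prime_ideal p \<Longrightarrow> x \<in> p \<Longrightarrow> r * x \<in> p"
  by (simp add: prime_ideal_def ring_ideal_def)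
lemma pi_mult2: "prime_ideal p \<Longrightarrow> x \<in> p \<Longrightarrow> x * r \<in> p"
  using pi_mult[of p x r] by (simp add: mult.commute)
lemma pi_uminus: "prime_ideal p \<Longrightarrow> x \<in> p \<Longrightarrow> - x \<in> p"
  using pi_mult[of p x "-1"] by simp
lemma pi_diff: "prime_ideal p \<Longrightarrow> x \<in> p \<Longrightarrow> y \<in> p \<Longrightarrow> x - y \<in> p"
  using pi_add[of p x "-y"] pi_uminus[of p y] by simp
lemma pi_nmult: "prime_ideal p \<Longrightarrow> a \<notin> p \<Longrightarrow> b \<notin> p \<Longrightarrow> a * b \<notin> p"
  by (auto simp: prime_ideal_def)
lemma pi_prod: assumes "prime_ideal p" "finite A" "\<And>i. i \<in> A \<Longrightarrow> f i \<notin> p" shows "prod f A \<notin> p"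
  using assms(2,3) by (induction A rule: finite_induct) (auto simp: pi_1[OF assms(1)] pi_nmult[OF assms(1)])
lemma pi_sum: "prime_ideal p \<Longrightarrow> (\<And>i. i \<in> A \<Longrightarrow> f i \<in> p) \<Longrightarrow> sum f A \<in> p"
  by (induction A rule: infinite_finite_induct) (auto simp: pi_0 pi_add)

lemma module_times: "module ((*) :: 'a::comm_ring_1 \<Rightarrow> 'a \<Rightarrow> 'a)"
  by unfold_locales (auto simp: algebra_simps)

section \<open>Localization classes\<close>

definition lrel :: "('a::comm_ring_1 \<Rightarrow> 'b::ab_group_add \<Rightarrow> 'b) \<Rightarrow> 'a set \<Rightarrow> 'b \<Rightarrow> 'a \<Rightarrow> 'b \<Rightarrow> 'a \<Rightarrow> bool" where
  "lrel sc p m u m' u' \<longleftrightarrow> (\<exists>t. t \<notin> p \<and> sc (t * u') m = sc (t * u) m')"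

context module
begin

lemma R_alt: "t *s (u' *s m - u *s m') = 0 \<longleftrightarrow> (t * u') *s m = (t * u) *s m'"
  by (simp add: scale_right_diff_distrib)

lemma L_mem: "(m', u') \<in> lcls scale p m u \<longleftrightarrow> u' \<notin> p \<and> lrel scale p m u m' u'"
  unfolding lcls_def lrel_def R_alt by simp

lemma L_refl: "u \<notin> p \<Longrightarrow> prime_ideal p \<Longrightarrow> (m, u) \<in> lcls scale p m u"
  unfolding L_mem lrel_def by (auto intro: exI[of _ 1] simp: pi_1)

lemma R_sym: "lrel scale p m u m' u' \<Longrightarrow> lrel scale p m' u' m u"
  unfolding lrel_def by metis

lemma R_trans:
  assumes pr: "prime_ideal p" and u: "u \<notin> p"
    and A: "lrel scale p m' u' m u" and B: "lrel scale p m u a b"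
  shows "lrel scale p m' u' a b"
proof -
  obtain t1 where t1: "t1 \<notin> p" "(t1 * u) *s m' = (t1 * u') *s m" using A unfolding lrel_def by blast
  obtain t2 where t2: "t2 \<notin> p" "(t2 * b) *s m = (t2 * u) *s a" using B unfolding lrel_def by blast
  have "(t1 * t2 * u * b) *s m' = (t2 * b) *s ((t1 * u) *s m')" by (simp add: ac_simps)
  also have "\<dots> = (t2 * b) *s ((t1 * u') *s m)" using t1 by simp
  also have "\<dots> = (t1 * u') *s ((t2 * b) *s m)" by (simp add: ac_simps)
  also have "\<dots> = (t1 * u') *s ((t2 * u) *s a)" using t2 by simp
  also have "\<dots> = (t1 * t2 * u * u') *s a" by (simp add: ac_simps)
  finally show ?thesis unfolding lrel_def using t1 t2 u pr
    by (intro exI[of _ "t1 * t2 * u"]) (auto simp: pi_nmult ac_simps)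
qed

lemma L_eq:
  assumes pr: "prime_ideal p" and u: "u \<notin> p" and u': "u' \<notin> p"
  shows "lcls scale p m u = lcls scale p m' u' \<longleftrightarrow> lrel scale p m u m' u'"
proof
  assume "lcls scale p m u = lcls scale p m' u'"
  then have "(m', u') \<in> lcls scale p m u" using L_refl[OF u' pr] by simp
  then show "lrel scale p m u m' u'" by (simp add: L_mem)
next
  assume r: "lrel scale p m u m' u'"
  show "lcls scale p m u = lcls scale p m' u'"
  proof (intro set_eqI, clarify)
    fix a b
    show "(a, b) \<in> lcls scale p m u \<longleftrightarrow> (a, b) \<in> lcls scale p m' u'"
      unfolding L_mem using R_trans[OF pr u R_sym[OF r]] R_trans[OF pr u' r] by blast
  qed
qed

lemma lrep_L:
  assumes pr: "prime_ideal p" and u: "u \<notin> p"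
  obtains a b where "lrep (lcls scale p m u) = (a, b)" "b \<notin> p" "lcls scale p a b = lcls scale p m u"
    "lrel scale p m u a b"
proof -
  have "lrep (lcls scale p m u) \<in> lcls scale p m u"
    unfolding lrep_def using L_refl[OF u pr] by (rule someI)
  then obtain a b where ab: "lrep (lcls scale p m u) = (a, b)" "(a, b) \<in> lcls scale p m u"
    by (cases "lrep (lcls scale p m u)") auto
  then have "b \<notin> p" "lrel scale p m u a b" by (auto simp: L_mem)
  moreover have "lcls scale p a b = lcls scale p m u"
    using L_eq[OF pr \<open>b \<notin> p\<close> u] R_sym[OF \<open>lrel scale p m u a b\<close>] by simp
  ultimately show ?thesis using that ab by blast
qed

lemma L_add:
  assumes pr: "prime_ideal p" and u: "u \<notin> p" and u': "u' \<notin> p"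
  shows "loc_add scale p (lcls scale p m u) (lcls scale p m' u') =
         lcls scale p (u' *s m + u *s m') (u * u')"
proof -
  obtain a b where ab: "lrep (lcls scale p m u) = (a, b)" "b \<notin> p" "lrel scale p m u a b"
    using lrep_L[OF pr u] by metis
  obtain a' b' where ab': "lrep (lcls scale p m' u') = (a', b')" "b' \<notin> p" "lrel scale p m' u' a' b'"
    using lrep_L[OF pr u'] by metis
  obtain t1 where t1: "t1 \<notin> p" "(t1 * b) *s m = (t1 * u) *s a" using ab(3) unfolding lrel_def by blast
  obtain t2 where t2: "t2 \<notin> p" "(t2 * b') *s m' = (t2 * u') *s a'" using ab'(3) unfolding lrel_def by blast
  have e1: "(t1 * t2 * (u * u') * b') *s a = (t1 * t2 * (b * b') * u') *s m"
  proof -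
    have "(t1 * t2 * (u * u') * b') *s a = (t2 * u' * b') *s ((t1 * u) *s a)" by (simp add: ac_simps)
    also have "\<dots> = (t2 * u' * b') *s ((t1 * b) *s m)" using t1 by simp
    finally show ?thesis by (simp add: ac_simps)
  qed
  have e2: "(t1 * t2 * (u * u') * b) *s a' = (t1 * t2 * (b * b') * u) *s m'"
  proof -
    have "(t1 * t2 * (u * u') * b) *s a' = (t1 * u * b) *s ((t2 * u') *s a')" by (simp add: ac_simps)
    also have "\<dots> = (t1 * u * b) *s ((t2 * b') *s m')" using t2 by simp
    finally show ?thesis by (simp add: ac_simps)
  qed
  have "lrel scale p (b' *s a + b *s a') (b * b') (u' *s m + u *s m') (u * u')"
    unfolding lrel_def using t1 t2 e1 e2
    by (intro exI[of _ "t1 * t2"]) (auto simp: pi_nmult[OF pr] scale_right_distrib ac_simps)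
  then show ?thesis
    unfolding loc_add_def ab(1) ab'(1)
    by (simp add: L_eq[OF pr] pi_nmult[OF pr] ab(2) ab'(2) u u')
qed


lemma L_smult:
  assumes pr: "prime_ideal p" and u: "u \<notin> p" and v: "v \<notin> p"
  shows "loc_smult scale p (lcls (*) p r v) (lcls scale p m u) = lcls scale p (r *s m) (v * u)"
proof -
  obtain r' v' where rv: "lrep (lcls (*) p r v) = (r', v')" "v' \<notin> p" "lrel (*) p r v r' v'"
    using module.lrep_L[OF module_times pr v] by metis
  obtain a b where ab: "lrep (lcls scale p m u) = (a, b)" "b \<notin> p" "lrel scale p m u a b"
    using lrep_L[OF pr u] by metis
  obtain t1 where t1: "t1 \<notin> p" "(t1 * v') * r = (t1 * v) * r'" using rv(3) unfolding lrel_def by blast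
  obtain t2 where t2: "t2 \<notin> p" "(t2 * b) *s m = (t2 * u) *s a" using ab(3) unfolding lrel_def by blast
  have "(t1 * t2 * (v * u)) *s (r' *s a) = ((t1 * v * r') * u) *s (t2 *s a)" by (simp add: ac_simps)
  also have "\<dots> = ((t1 * v' * r) * u) *s (t2 *s a)" using t1 by (simp add: ac_simps)
  also have "\<dots> = (t1 * v' * r) *s ((t2 * u) *s a)" by (simp add: ac_simps)
  also have "\<dots> = (t1 * v' * r) *s ((t2 * b) *s m)" using t2 by simp
  also have "\<dots> = (t1 * t2 * (v' * b)) *s (r *s m)" by (simp add: ac_simps)
  finally have "lrel scale p (r' *s a) (v' * b) (r *s m) (v * u)"
    unfolding lrel_def using t1 t2 pr by (intro exI[of _ "t1 * t2"]) (auto simp: pi_nmult)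
  then show ?thesis
    unfolding loc_smult_def rv(1) ab(1)
    by (simp add: L_eq[OF pr] pi_nmult[OF pr] rv(2) ab(2) u v)
qed

lemma lsum_formula:
  assumes pr: "prime_ideal p"
    and h: "\<And>i. i < n \<Longrightarrow> v i \<notin> p \<and> w i \<notin> p \<and> a i = lcls (*) p (r i) (v i) \<and> g i = lcls scale p (y i) (w i)"
  shows "loc_lsum scale p a g n =
    lcls scale p (\<Sum>i<n. (r i * (\<Prod>j\<in>{..<n}-{i}. v j * w j)) *s y i) (\<Prod>j<n. v j * w j)"
  using h
proof (induction n)
  case 0
  then show ?case by (simp add: loc_zero_def)
next
  case (Suc n)
  let ?P = "\<lambda>n i. \<Prod>j\<in>{..<n}-{i}. v j * w j"
  have IH: "loc_lsum scale p a g n = lcls scale p (\<Sum>i<n. (r i * ?P n i) *s y i) (\<Prod>j<n. v j * w j)"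
    using Suc by auto
  have hn: "v n \<notin> p" "w n \<notin> p" "a n = lcls (*) p (r n) (v n)" "g n = lcls scale p (y n) (w n)"
    using Suc.prems by auto
  have V: "(\<Prod>j<n. v j * w j) \<notin> p" using Suc.prems by (intro pi_prod[OF pr]) (auto simp: pi_nmult[OF pr])
  have P: "?P (Suc n) i = (v n * w n) * ?P n i" if "i < n" for i
  proof -
    have "{..<Suc n}-{i} = insert n ({..<n}-{i})" using that by auto
    then show ?thesis by simp
  qed
  have Pn: "?P (Suc n) n = (\<Prod>j<n. v j * w j)"
  proof -
    have "{..<Suc n}-{n} = {..<n}" by auto
    then show ?thesis by simp
  qed
  have "loc_lsum scale p a g (Suc n) = lcls scale p
      ((v n * w n) *s (\<Sum>i<n. (r i * ?P n i) *s y i) + (\<Prod>j<n. v j * w j) *s (r n *s y n))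
      ((\<Prod>j<n. v j * w j) * (v n * w n))"
    by (simp add: IH hn L_smult[OF pr] L_add[OF pr] V pi_nmult[OF pr])
  also have "(v n * w n) *s (\<Sum>i<n. (r i * ?P n i) *s y i) = (\<Sum>i<n. (r i * ?P (Suc n) i) *s y i)"
    unfolding scale_sum_right by (intro sum.cong refl) (simp add: P ac_simps)
  finally show ?case by (simp add: Pn ac_simps)
qed

end

definition rlin :: "('a::comm_ring_1 \<Rightarrow> 'b::ab_group_add \<Rightarrow> 'b) \<Rightarrow> ('b \<Rightarrow> 'a) \<Rightarrow> bool" where
  "rlin sc f \<longleftrightarrow> (\<forall>x y. f (x + y) = f x + f y) \<and> (\<forall>r x. f (sc r x) = r * f x)"

definition PP :: "('a::comm_ring_1 \<Rightarrow> 'b::ab_group_add \<Rightarrow> 'b) \<Rightarrow> 'a set \<Rightarrow> 'b set \<Rightarrow> nat \<Rightarrow> bool" where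
  "PP sc p S n \<longleftrightarrow> (\<exists>x f s. s \<notin> p \<and> (\<forall>j<n. x j \<in> module.span sc S) \<and> (\<forall>i<n. rlin sc (f i)) \<and>
      (\<forall>i<n. \<forall>j<n. f i (x j) = (if i = j then s else 0)))"

definition EE :: "('a::comm_ring_1 \<Rightarrow> 'b::ab_group_add \<Rightarrow> 'b) \<Rightarrow> 'a set \<Rightarrow> 'b set \<Rightarrow> nat \<Rightarrow> bool" where
  "EE sc p S n \<longleftrightarrow> (\<exists>G. loc_free_rank sc p G n \<and> G \<subseteq> locset sc p (module.span sc S) \<and> loc_direct_summand sc p G)"

lemma rlin_0: "rlin sc f \<Longrightarrow> f 0 = 0"
  unfolding rlin_def by (metis add_cancel_left_right)

lemma rlin_sum: "rlin sc f \<Longrightarrow> f (sum g A) = (\<Sum>a\<in>A. f (g a))"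
  by (induction A rule: infinite_finite_induct) (auto simp: rlin_0, simp add: rlin_def)

lemma rlin_diff: "module sc \<Longrightarrow> rlin sc f \<Longrightarrow> f (x - y) = f x - f y"
proof -
  assume m: "module sc" and f: "rlin sc f"
  have "f (x - y) + f y = f x" using f unfolding rlin_def by (metis diff_add_cancel)
  then show ?thesis by (simp add: eq_diff_eq)
qed

lemma rlin_scale: "rlin sc f \<Longrightarrow> f (sc r x) = r * f x"
  unfolding rlin_def by blast
lemma rlin_add: "rlin sc f \<Longrightarrow> f (x + y) = f x + f y"
  unfolding rlin_def by blast

context module
begin

lemma locset_iff: "X \<in> locset scale p N \<longleftrightarrow> (\<exists>m u. X = lcls scale p m u \<and> m \<in> N \<and> u \<notin> p)"
  unfolding locset_def by blast

lemma PP_EE: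
  assumes pr: "prime_ideal p" and P: "PP scale p S n"
  shows "EE scale p S n"
proof -
  obtain x f s where s: "s \<notin> p" and xS: "\<And>j. j < n \<Longrightarrow> x j \<in> span S"
    and fl: "\<And>i. i < n \<Longrightarrow> rlin scale (f i)"
    and fx: "\<And>i j. i < n \<Longrightarrow> j < n \<Longrightarrow> f i (x j) = (if i = j then s else 0)"
    using P unfolding PP_def by blast
  have one: "(1::'a) \<notin> p" using pi_1[OF pr] .
  let ?L = "lcls scale p"
  let ?Lr = "lcls (*) p"
  define gg where "gg i = ?L (x i) 1" for i
  define G where "G = {loc_lsum scale p a gg n | a. \<forall>i<n. a i \<in> locset (*) p UNIV}"
  define G' where "G' = {?L (\<Sum>i<n. c i *s x i) u | c u. u \<notin> p}"
  have fsum: "f k (\<Sum>i<n. c i *s x i) = c k * s" if "k < n" for k c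
  proof -
    have "f k (\<Sum>i<n. c i *s x i) = (\<Sum>i<n. c i * f k (x i))"
      using fl[OF that] by (simp add: rlin_sum rlin_scale)
    also have "\<dots> = (\<Sum>i<n. if i = k then c i * s else 0)"
      using that by (intro sum.cong) (auto simp: fx)
    finally show ?thesis using that by simp
  qed
  have GG': "G = G'"
  proof (intro set_eqI iffI)
    fix X assume "X \<in> G"
    then obtain a where X: "X = loc_lsum scale p a gg n" and a: "\<forall>i<n. a i \<in> locset (*) p UNIV"
      unfolding G_def by blast
    have "\<forall>i<n. \<exists>rv. a i = ?Lr (fst rv) (snd rv) \<and> snd rv \<notin> p"
      using a by (auto simp: module.locset_iff[OF module_times])
    then obtain rv where rv: "\<And>i. i < n \<Longrightarrow> a i = ?Lr (fst (rv i)) (snd (rv i)) \<and> snd (rv i) \<notin> p"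
      by metis
    have "X = ?L (\<Sum>i<n. (fst (rv i) * (\<Prod>j\<in>{..<n}-{i}. snd (rv j) * 1)) *s x i) (\<Prod>j<n. snd (rv j) * 1)"
      unfolding X by (rule lsum_formula[OF pr]) (use rv one in \<open>auto simp: gg_def\<close>)
    moreover have "(\<Prod>j<n. snd (rv j) * 1) \<notin> p" using rv by (intro pi_prod[OF pr]) auto
    ultimately show "X \<in> G'" unfolding G'_def
      by (intro CollectI exI[of _ "\<lambda>i. fst (rv i) * (\<Prod>j\<in>{..<n}-{i}. snd (rv j) * 1)"]
          exI[of _ "\<Prod>j<n. snd (rv j) * 1"]) simp
  next
    fix X assume "X \<in> G'"
    then obtain c u where X: "X = ?L (\<Sum>i<n. c i *s x i) u" and u: "u \<notin> p" unfolding G'_def by blast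
    define a where "a i = ?Lr (c i) u" for i
    have "loc_lsum scale p a gg n = ?L (\<Sum>i<n. (c i * (\<Prod>j\<in>{..<n}-{i}. u * 1)) *s x i) (\<Prod>j<n. u * 1)"
      by (rule lsum_formula[OF pr]) (use u one in \<open>auto simp: gg_def a_def\<close>)
    also have "\<dots> = X" unfolding X
    proof (subst L_eq[OF pr])
      show "(\<Prod>j<n. u * 1) \<notin> p" using u by (intro pi_prod[OF pr]) auto
      show "u \<notin> p" by fact
      have "(1 * u) *s (\<Sum>i<n. (c i * (\<Prod>j\<in>{..<n}-{i}. u * 1)) *s x i)
          = (1 * (\<Prod>j<n. u * 1)) *s (\<Sum>i<n. c i *s x i)"
        unfolding scale_sum_right
      proof (intro sum.cong refl)
        fix i assume "i \<in> {..<n}"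
        then have i: "i < n" by simp
        have "card ({..<n}-{i}) = n - 1" using i by simp
        then have e: "u * (\<Prod>j\<in>{..<n}-{i}. u * 1) = (\<Prod>j<n. u * 1)" using i
          by (simp add: power_eq_if[of u n])
        have "(1 * u) *s (c i * (\<Prod>j\<in>{..<n}-{i}. u * 1)) *s x i
           = (c i * (u * (\<Prod>j\<in>{..<n}-{i}. u * 1))) *s x i" by (simp only: scale_scale ac_simps mult_1_left)
        also have "\<dots> = (1 * (\<Prod>j<n. u * 1)) *s c i *s x i" unfolding e by (simp add: ac_simps)
        finally show "(1 * u) *s (c i * (\<Prod>j\<in>{..<n}-{i}. u * 1)) *s x i = (1 * (\<Prod>j<n. u * 1)) *s c i *s x i" .
      qed
      then show "lrel scale p (\<Sum>i<n. (c i * (\<Prod>j\<in>{..<n}-{i}. u * 1)) *s x i) (\<Prod>j<n. u * 1)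
         (\<Sum>i<n. c i *s x i) u"
        unfolding lrel_def using one by blast
    qed
    finally show "X \<in> G" unfolding G_def a_def
      using u by (auto simp: module.locset_iff[OF module_times])
  qed
  have zero: "loc_zero scale p = ?L 0 1" by (simp add: loc_zero_def)
  have Lzero: "?L m u = loc_zero scale p" if "u \<notin> p" "t \<notin> p" "t *s m = 0" for m u t
    unfolding zero using that one by (subst L_eq[OF pr]) (auto simp: lrel_def)
  have indep: "\<forall>i<n. a i = loc_zero (*) p"
    if a: "\<forall>i<n. a i \<in> locset (*) p UNIV" and z: "loc_lsum scale p a gg n = loc_zero scale p" for a
  proof -
    have "\<forall>i<n. \<exists>rv. a i = ?Lr (fst rv) (snd rv) \<and> snd rv \<notin> p"
      using a by (auto simp: module.locset_iff[OF module_times])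
    then obtain rv where rv: "\<And>i. i < n \<Longrightarrow> a i = ?Lr (fst (rv i)) (snd (rv i)) \<and> snd (rv i) \<notin> p"
      by metis
    define P where "P i = (\<Prod>j\<in>{..<n}-{i}. snd (rv j) * 1)" for i
    have Pp: "P i \<notin> p" for i unfolding P_def using rv by (intro pi_prod[OF pr]) auto
    have "loc_lsum scale p a gg n = ?L (\<Sum>i<n. (fst (rv i) * P i) *s x i) (\<Prod>j<n. snd (rv j) * 1)"
      unfolding P_def by (rule lsum_formula[OF pr]) (use rv one in \<open>auto simp: gg_def\<close>)
    moreover have "(\<Prod>j<n. snd (rv j) * 1) \<notin> p" using rv by (intro pi_prod[OF pr]) auto
    ultimately have "lrel scale p (\<Sum>i<n. (fst (rv i) * P i) *s x i) (\<Prod>j<n. snd (rv j) * 1) 0 1"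
      using z unfolding zero by (simp add: L_eq[OF pr] one) (erule R_sym)
    then obtain t where t: "t \<notin> p" "(t * 1) *s (\<Sum>i<n. (fst (rv i) * P i) *s x i) = 0"
      unfolding lrel_def by auto
    show ?thesis
    proof (intro allI impI)
      fix k assume k: "k < n"
      have "f k ((t * 1) *s (\<Sum>i<n. (fst (rv i) * P i) *s x i)) = 0" using t(2) rlin_0[OF fl[OF k]] by simp
      then have e: "t * (fst (rv k) * P k * s) = 0"
        using fl[OF k] fsum[OF k] by (simp add: rlin_scale)
      have stp: "s * (t * P k) \<notin> p" using s t(1) Pp by (simp add: pi_nmult[OF pr])
      have "?Lr (fst (rv k)) (snd (rv k)) = ?Lr 0 1"
        using rv[OF k] one e stp
        by (subst module.L_eq[OF module_times pr]) (auto simp: lrel_def ac_simps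
            intro!: exI[of _ "t * P k * s"] pi_nmult[OF pr] Pp t(1) s)
      then show "a k = loc_zero (*) p" using rv[OF k] by (simp add: loc_zero_def)
    qed
  qed
  have free: "loc_free_rank scale p G n"
    unfolding loc_free_rank_def
  proof (intro exI[of _ gg] conjI)
    show "\<forall>i<n. gg i \<in> locset scale p UNIV" using one by (auto simp: gg_def locset_iff)
    show "G = {loc_lsum scale p a gg n |a. \<forall>i<n. a i \<in> locset (*) p UNIV}" by (simp add: G_def)
    show "\<forall>a. (\<forall>i<n. a i \<in> locset (*) p UNIV) \<and> loc_lsum scale p a gg n = loc_zero scale p \<longrightarrow>
        (\<forall>i<n. a i = loc_zero (*) p)" using indep by blast
  qed
  have Gsub: "G \<subseteq> locset scale p (span S)"
    unfolding GG' G'_def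
  proof clarify
    fix c u assume u: "u \<notin> p"
    show "?L (\<Sum>i<n. c i *s x i) u \<in> locset scale p (span S)"
      unfolding locset_iff using u xS
      by (intro exI[of _ "\<Sum>i<n. c i *s x i"] exI[of _ u]) (auto intro!: span_sum span_scale)
  qed
  define H where "H = {?L m u | m u. u \<notin> p \<and> (\<forall>i<n. f i m = 0)}"
  have inG: "?L (\<Sum>i<n. c i *s x i) u \<in> G" if "u \<notin> p" for c u
    unfolding GG' G'_def using that by blast
  have Gsm: "loc_submodule scale p G"
    unfolding loc_submodule_def
  proof (intro conjI ballI)
    show "G \<subseteq> locset scale p UNIV" unfolding GG' G'_def locset_def by blast
    show "loc_zero scale p \<in> G" unfolding GG' G'_def zero using one
      by (intro CollectI exI[of _ "\<lambda>i. 0"] exI[of _ 1]) simp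
  next
    fix X Y assume "X \<in> G" "Y \<in> G"
    then obtain c u d w where X: "X = ?L (\<Sum>i<n. c i *s x i) u" "u \<notin> p"
      and Y: "Y = ?L (\<Sum>i<n. d i *s x i) w" "w \<notin> p" unfolding GG' G'_def by blast
    have "loc_add scale p X Y = ?L (\<Sum>i<n. (w * c i + u * d i) *s x i) (u * w)"
      unfolding X Y L_add[OF pr X(2) Y(2)]
      by (simp add: scale_sum_right scale_left_distrib sum.distrib)
    then show "loc_add scale p X Y \<in> G" using X(2) Y(2) by (simp add: inG pi_nmult[OF pr])
  next
    fix A X assume A: "A \<in> locset (*) p UNIV" and "X \<in> G"
    then obtain c u where X: "X = ?L (\<Sum>i<n. c i *s x i) u" "u \<notin> p" unfolding GG' G'_def by blast
    obtain r v where A: "A = ?Lr r v" "v \<notin> p" using A by (auto simp: module.locset_iff[OF module_times])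
    have "loc_smult scale p A X = ?L (\<Sum>i<n. (r * c i) *s x i) (v * u)"
      unfolding X A L_smult[OF pr X(2) A(2)] by (simp add: scale_sum_right)
    then show "loc_smult scale p A X \<in> G" using X(2) A(2) by (simp add: inG pi_nmult[OF pr])
  qed
  have Hsm: "loc_submodule scale p H"
    unfolding loc_submodule_def
  proof (intro conjI ballI)
    show "H \<subseteq> locset scale p UNIV" unfolding H_def locset_def by blast
    have "\<forall>i<n. f i 0 = 0" using fl rlin_0 by blast
    then show "loc_zero scale p \<in> H" unfolding H_def zero using one by blast
  next
    fix X Y assume "X \<in> H" "Y \<in> H"
    then obtain m u m' w where X: "X = ?L m u" "u \<notin> p" "\<forall>i<n. f i m = 0"
      and Y: "Y = ?L m' w" "w \<notin> p" "\<forall>i<n. f i m' = 0" unfolding H_def by blast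
    have "loc_add scale p X Y = ?L (w *s m + u *s m') (u * w)"
      unfolding X Y L_add[OF pr X(2) Y(2)] ..
    moreover have "\<forall>i<n. f i (w *s m + u *s m') = 0"
    proof (intro allI impI)
      fix i assume i: "i < n"
      show "f i (w *s m + u *s m') = 0" using rlin_add[OF fl[OF i]] rlin_scale[OF fl[OF i]] X(3) Y(3) i by simp
    qed
    ultimately show "loc_add scale p X Y \<in> H" unfolding H_def using X(2) Y(2) pi_nmult[OF pr, of u w] by blast
  next
    fix A X assume A: "A \<in> locset (*) p UNIV" and "X \<in> H"
    then obtain m u where X: "X = ?L m u" "u \<notin> p" "\<forall>i<n. f i m = 0" unfolding H_def by blast
    obtain r v where A: "A = ?Lr r v" "v \<notin> p" using A by (auto simp: module.locset_iff[OF module_times])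
    have "loc_smult scale p A X = ?L (r *s m) (v * u)"
      unfolding X A L_smult[OF pr X(2) A(2)] ..
    moreover have "\<forall>i<n. f i (r *s m) = 0"
      using X(3) rlin_scale[OF fl] by simp
    ultimately show "loc_smult scale p A X \<in> H" unfolding H_def using X(2) A(2) pi_nmult[OF pr, of v u] by blast
  qed
  have GH: "G \<inter> H = {loc_zero scale p}"
  proof (intro equalityI subsetI)
    fix X assume "X \<in> G \<inter> H"
    then obtain c u m w where X: "X = ?L (\<Sum>i<n. c i *s x i) u" "u \<notin> p"
      and X': "X = ?L m w" "w \<notin> p" "\<forall>i<n. f i m = 0" unfolding GG' G'_def H_def by blast
    have "lrel scale p (\<Sum>i<n. c i *s x i) u m w" using X X' by (simp add: L_eq[OF pr]) (erule R_sym)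
    then obtain t where t: "t \<notin> p" "(t * w) *s (\<Sum>i<n. c i *s x i) = (t * u) *s m"
      unfolding lrel_def by blast
    have ck: "t * w * s * c k = 0" if k: "k < n" for k
    proof -
      have "f k ((t * w) *s (\<Sum>i<n. c i *s x i)) = f k ((t * u) *s m)" using t(2) by simp
      then show ?thesis using fl[OF k] fsum[OF k] X'(3) k by (simp add: rlin_scale ac_simps)
    qed
    have "(t * w * s) *s (\<Sum>i<n. c i *s x i) = 0"
      unfolding scale_sum_right by (intro sum.neutral) (simp add: ck)
    moreover have "t * w * s \<notin> p" using t(1) X'(2) s by (simp add: pi_nmult[OF pr])
    ultimately show "X \<in> {loc_zero scale p}" using Lzero X by blast
  next
    fix X assume "X \<in> {loc_zero scale p}"
    then have X: "X = loc_zero scale p" by simp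
    show "X \<in> G \<inter> H" using Gsm Hsm X unfolding loc_submodule_def by blast
  qed
  have dec: "\<exists>g\<in>G. \<exists>h\<in>H. X = loc_add scale p g h" if Xin: "X \<in> locset scale p UNIV" for X
  proof -
    obtain m u where X: "X = ?L m u" "u \<notin> p" using Xin unfolding locset_iff by blast
    let ?A = "\<Sum>i<n. f i m *s x i"
    have su: "s * u \<notin> p" using s X(2) by (simp add: pi_nmult[OF pr])
    have g: "?L ?A (s * u) \<in> G" using inG[OF su] .
    have "f k (s *s m - ?A) = 0" if k: "k < n" for k
      using fl[OF k] fsum[OF k] rlin_diff[OF module_axioms fl[OF k]] by (simp add: rlin_scale ac_simps)
    then have h: "?L (s *s m - ?A) (s * u) \<in> H" unfolding H_def using su by blast
    have ssuu: "s * u * (s * u) \<notin> p" using su by (simp add: pi_nmult[OF pr])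
    have "loc_add scale p (?L ?A (s * u)) (?L (s *s m - ?A) (s * u)) = ?L ((s * u * s) *s m) ((s * u) * (s * u))"
      by (simp add: L_add[OF pr su su] scale_right_diff_distrib)
    also have "\<dots> = X" unfolding X
      using su X(2) one ssuu by (subst L_eq[OF pr]) (auto simp: pi_nmult[OF pr] lrel_def ac_simps intro!: exI[of _ 1])
    finally show ?thesis using g h by metis
  qed
  have "loc_direct_summand scale p G"
    unfolding loc_direct_summand_def using Gsm Hsm GH dec by blast
  then show ?thesis unfolding EE_def using free Gsub by blast
qed

end

lemma noeth_max:
  assumes N: "noetherian_ring TYPE('a::comm_ring_1)" and ne: "\<I> \<noteq> {}"
    and id: "\<And>I. I \<in> \<I> \<Longrightarrow> ring_ideal (I :: 'a set)"
  shows "\<exists>I\<in>\<I>. \<forall>J\<in>\<I>. I \<subseteq> J \<longrightarrow> J = I"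
proof (rule ccontr)
  assume "\<not> ?thesis"
  then have step: "\<forall>I\<in>\<I>. \<exists>J\<in>\<I>. I \<subset> J" by auto
  obtain I0 where I0: "I0 \<in> \<I>" using ne by blast
  define c where "c = rec_nat I0 (\<lambda>_ I. SOME J. J \<in> \<I> \<and> I \<subset> J)"
  have cS: "c (Suc k) = (SOME J. J \<in> \<I> \<and> c k \<subset> J)" for k by (simp add: c_def)
  have c0: "c 0 = I0" by (simp add: c_def)
  have cI: "c k \<in> \<I>" for k
  proof (induction k)
    case 0 then show ?case using I0 c0 by simp
  next
    case (Suc k)
    then have "\<exists>J. J \<in> \<I> \<and> c k \<subset> J" using step by blast
    then have "(SOME J. J \<in> \<I> \<and> c k \<subset> J) \<in> \<I> \<and> c k \<subset> (SOME J. J \<in> \<I> \<and> c k \<subset> J)"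
      by (rule someI_ex)
    then show ?case unfolding cS by (rule conjunct1)
  qed
  have cs: "c k \<subset> c (Suc k)" for k
  proof -
    have "\<exists>J. J \<in> \<I> \<and> c k \<subset> J" using step cI[of k] by blast
    then have "(SOME J. J \<in> \<I> \<and> c k \<subset> J) \<in> \<I> \<and> c k \<subset> (SOME J. J \<in> \<I> \<and> c k \<subset> J)"
      by (rule someI_ex)
    then show ?thesis unfolding cS by (rule conjunct2)
  qed
  have "(\<forall>k. ring_ideal (c k)) \<and> (\<forall>k. c k \<subseteq> c (Suc k))"
    using cI id cs by (simp add: psubset_imp_subset)
  then have "\<exists>M. \<forall>k\<ge>M. c k = c M"
    using N unfolding noetherian_ring_def by (elim allE[of _ c]) (erule mp)
  then obtain M where M: "\<forall>k\<ge>M. c k = c M" ..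
  have "c (Suc M) = c M" by (rule M[rule_format]) simp
  then show False using cs[of M] by simp
qed
definition gen :: "'a::comm_ring_1 set \<Rightarrow> 'a set" where
  "gen F = {y. \<exists>c. y = (\<Sum>f\<in>F. c f * f)}"

lemma gen_ideal: "ring_ideal (gen F)"
  unfolding ring_ideal_def gen_def
proof (intro conjI ballI allI)
  show "0 \<in> {y. \<exists>c. y = (\<Sum>f\<in>F. c f * f)}" by (auto intro: exI[of _ "\<lambda>_. 0"])
next
  fix x y assume "x \<in> {y. \<exists>c. y = (\<Sum>f\<in>F. c f * f)}" "y \<in> {y. \<exists>c. y = (\<Sum>f\<in>F. c f * f)}"
  then obtain c d where "x = (\<Sum>f\<in>F. c f * f)" "y = (\<Sum>f\<in>F. d f * f)" by blast
  then have "x + y = (\<Sum>f\<in>F. (c f + d f) * f)" by (simp add: sum.distrib distrib_right)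
  then show "x + y \<in> {y. \<exists>c. y = (\<Sum>f\<in>F. c f * f)}" by (intro CollectI exI[of _ "\<lambda>f. c f + d f"])
next
  fix r x assume "x \<in> {y. \<exists>c. y = (\<Sum>f\<in>F. c f * f)}"
  then obtain c where "x = (\<Sum>f\<in>F. c f * f)" by blast
  then have "r * x = (\<Sum>f\<in>F. (r * c f) * f)" by (simp add: sum_distrib_left ac_simps)
  then show "r * x \<in> {y. \<exists>c. y = (\<Sum>f\<in>F. c f * f)}" by (intro CollectI exI[of _ "\<lambda>f. r * c f"])
qed

lemma gen_mono: "finite F' \<Longrightarrow> F \<subseteq> F' \<Longrightarrow> gen F \<subseteq> gen F'"
proof
  fix y assume fin: "finite F'" and sub: "F \<subseteq> F'" and "y \<in> gen F"
  then obtain c where y: "y = (\<Sum>f\<in>F. c f * f)" unfolding gen_def by blast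
  have "(\<Sum>f\<in>F'. (if f \<in> F then c f else 0) * f) = (\<Sum>f\<in>F. c f * f)"
    using fin sub by (simp add: if_distrib[of "\<lambda>x. x * _"] sum.If_cases Int_absorb1)
  then show "y \<in> gen F'" unfolding gen_def y by (auto intro: exI[of _ "\<lambda>f. if f \<in> F then c f else 0"] simp del: if_distrib)
qed

lemma gen_mem: assumes "finite F" "x \<in> F" shows "x \<in> gen F"
proof -
  have "(\<Sum>f\<in>F. (if f = x then 1 else 0) * f) = (\<Sum>f\<in>F. if f = x then f else 0)"
    by (intro sum.cong) auto
  also have "\<dots> = x" using assms by (simp add: sum.delta')
  finally show ?thesis unfolding gen_def by (intro CollectI exI[of _ "\<lambda>f. if f = x then 1 else 0"]) simp
qed

lemma noeth_fg:
  assumes N: "noetherian_ring TYPE('a::comm_ring_1)"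
  shows "\<exists>F0. finite F0 \<and> F0 \<subseteq> (Y :: 'a set) \<and> Y \<subseteq> gen F0"
proof -
  let ?I = "{gen F | F. finite F \<and> F \<subseteq> Y}"
  have "\<exists>I\<in>?I. \<forall>J\<in>?I. I \<subseteq> J \<longrightarrow> J = I"
    by (rule noeth_max[OF N]) (auto simp: gen_ideal)
  then obtain F0 where F0: "finite F0" "F0 \<subseteq> Y" and mx: "\<forall>J\<in>?I. gen F0 \<subseteq> J \<longrightarrow> J = gen F0"
    by blast
  have "Y \<subseteq> gen F0"
  proof
    fix x assume x: "x \<in> Y"
    have "gen (insert x F0) \<in> ?I" using F0 x by blast
    moreover have "gen F0 \<subseteq> gen (insert x F0)" using F0 by (intro gen_mono) auto
    ultimately have "gen (insert x F0) = gen F0" using mx by blast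
    moreover have "x \<in> gen (insert x F0)" using F0 by (intro gen_mem) auto
    ultimately show "x \<in> gen F0" by simp
  qed
  then show ?thesis using F0 by blast
qed

lemma noeth_ann:
  assumes N: "noetherian_ring TYPE('a::comm_ring_1)" and pr: "prime_ideal p"
    and Y: "\<And>y. y \<in> Y \<Longrightarrow> \<exists>t. t \<notin> p \<and> t * y = (0::'a)"
  shows "\<exists>T. T \<notin> p \<and> (\<forall>y\<in>Y. T * y = 0)"
proof -
  obtain F0 where F0: "finite F0" "F0 \<subseteq> Y" "Y \<subseteq> gen F0" using noeth_fg[OF N] by blast
  have "\<forall>f\<in>F0. \<exists>t. t \<notin> p \<and> t * f = 0" using F0 Y by blast
  then obtain tt where tt: "\<And>f. f \<in> F0 \<Longrightarrow> tt f \<notin> p \<and> tt f * f = 0" by metis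
  define T where "T = prod tt F0"
  have T: "T \<notin> p" unfolding T_def using tt by (intro pi_prod[OF pr F0(1)]) auto
  have Tf: "T * f = 0" if f: "f \<in> F0" for f
  proof -
    have "T = tt f * prod tt (F0 - {f})" unfolding T_def using F0(1) f by (simp add: prod.remove)
    then have "T * f = prod tt (F0 - {f}) * (tt f * f)" by (simp add: ac_simps)
    then show ?thesis using tt[OF f] by simp
  qed
  have "T * y = 0" if yY: "y \<in> Y" for y
  proof -
    obtain c where y: "y = (\<Sum>f\<in>F0. c f * f)" using F0(3) yY unfolding gen_def by blast
    have "T * y = (\<Sum>f\<in>F0. c f * (T * f))" unfolding y by (simp add: sum_distrib_left ac_simps)
    also have "\<dots> = 0" using Tf by simp
    finally show ?thesis .
  qed
  then show ?thesis using T by blast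
qed

context module
begin

lemma lsum_const:
  assumes pr: "prime_ideal p" and g: "\<And>i. i < n \<Longrightarrow> w i \<notin> p \<and> g i = lcls scale p (y i) (w i)"
    and u: "u \<notin> p"
  shows "loc_lsum scale p (\<lambda>j. lcls (*) p (c j * w j) u) g n = lcls scale p (\<Sum>j<n. c j *s y j) u"
proof -
  have "loc_lsum scale p (\<lambda>j. lcls (*) p (c j * w j) u) g n =
    lcls scale p (\<Sum>i<n. (c i * w i * (\<Prod>j\<in>{..<n}-{i}. u * w j)) *s y i) (\<Prod>j<n. u * w j)"
    by (rule lsum_formula[OF pr]) (use g u in auto)
  also have "\<dots> = lcls scale p (\<Sum>j<n. c j *s y j) u"
  proof (subst L_eq[OF pr])
    show "(\<Prod>j<n. u * w j) \<notin> p" using g u by (intro pi_prod[OF pr]) (auto simp: pi_nmult[OF pr])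
    show "u \<notin> p" by fact
    have "(1 * u) *s (\<Sum>i<n. (c i * w i * (\<Prod>j\<in>{..<n}-{i}. u * w j)) *s y i)
        = (1 * (\<Prod>j<n. u * w j)) *s (\<Sum>j<n. c j *s y j)"
      unfolding scale_sum_right
    proof (intro sum.cong refl)
      fix i assume "i \<in> {..<n}"
      then have e: "(\<Prod>j<n. u * w j) = (u * w i) * (\<Prod>j\<in>{..<n}-{i}. u * w j)"
        by (simp add: prod.remove)
      show "(1 * u) *s (c i * w i * (\<Prod>j\<in>{..<n}-{i}. u * w j)) *s y i =
          (1 * (\<Prod>j<n. u * w j)) *s c i *s y i"
        unfolding e by (simp add: ac_simps)
    qed
    then show "lrel scale p (\<Sum>i<n. (c i * w i * (\<Prod>j\<in>{..<n}-{i}. u * w j)) *s y i) (\<Prod>j<n. u * w j)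
        (\<Sum>j<n. c j *s y j) u"
      unfolding lrel_def using pi_1[OF pr] by blast
  qed
  finally show ?thesis .
qed

lemma lsum_repr:
  assumes pr: "prime_ideal p" and g: "\<And>i. i < n \<Longrightarrow> w i \<notin> p \<and> g i = lcls scale p (y i) (w i)"
    and a: "\<forall>i<n. a i \<in> locset (*) p UNIV"
  shows "\<exists>c u. u \<notin> p \<and> loc_lsum scale p a g n = lcls scale p (\<Sum>j<n. c j *s y j) u"
proof -
  have "\<forall>i<n. \<exists>rv. a i = lcls (*) p (fst rv) (snd rv) \<and> snd rv \<notin> p"
    using a by (auto simp: module.locset_iff[OF module_times])
  then obtain rv where rv: "\<And>i. i < n \<Longrightarrow> a i = lcls (*) p (fst (rv i)) (snd (rv i)) \<and> snd (rv i) \<notin> p"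
    by metis
  have "loc_lsum scale p a g n = lcls scale p
     (\<Sum>i<n. (fst (rv i) * (\<Prod>j\<in>{..<n}-{i}. snd (rv j) * w j)) *s y i) (\<Prod>j<n. snd (rv j) * w j)"
    by (rule lsum_formula[OF pr]) (use rv g in auto)
  moreover have "(\<Prod>j<n. snd (rv j) * w j) \<notin> p" using rv g by (intro pi_prod[OF pr]) (auto simp: pi_nmult[OF pr])
  ultimately show ?thesis
    by (intro exI[of _ "\<lambda>i. fst (rv i) * (\<Prod>j\<in>{..<n}-{i}. snd (rv j) * w j)"]
        exI[of _ "\<Prod>j<n. snd (rv j) * w j"]) simp
qed

lemma EE_PP:
  assumes N: "noetherian_ring TYPE('a)" and pr: "prime_ideal p"
    and F: "finite F" "span F = UNIV" and E: "EE scale p S n"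
  shows "PP scale p S n"
proof -
  let ?L = "lcls scale p"
  let ?Lr = "lcls (*) p"
  have one: "(1::'a) \<notin> p" using pi_1[OF pr] .
  have zero: "loc_zero scale p = ?L 0 1" by (simp add: loc_zero_def)
  have Lzero: "?L m u = loc_zero scale p \<longleftrightarrow> (\<exists>t. t \<notin> p \<and> t *s m = 0)" if "u \<notin> p" for m u
    unfolding zero using that one by (subst L_eq[OF pr]) (auto simp: lrel_def)
  obtain G where free: "loc_free_rank scale p G n" and Gsub: "G \<subseteq> locset scale p (span S)"
    and ds: "loc_direct_summand scale p G" using E unfolding EE_def by (elim exE conjE)
  obtain g where gl: "\<forall>i<n. g i \<in> locset scale p UNIV"
    and Gdef: "G = {loc_lsum scale p a g n | a. \<forall>i<n. a i \<in> locset (*) p UNIV}"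
    and ind0: "\<forall>a. (\<forall>i<n. a i \<in> locset (*) p UNIV) \<and> loc_lsum scale p a g n = loc_zero scale p
               \<longrightarrow> (\<forall>i<n. a i = loc_zero (*) p)"
    using free unfolding loc_free_rank_def by (elim exE conjE)
  have ind: "\<And>a. (\<forall>i<n. a i \<in> locset (*) p UNIV) \<Longrightarrow> loc_lsum scale p a g n = loc_zero scale p
               \<Longrightarrow> (\<forall>i<n. a i = loc_zero (*) p)" using ind0 by blast
  obtain H where Gsm: "loc_submodule scale p G" and Hsm: "loc_submodule scale p H"
    and GH: "G \<inter> H = {loc_zero scale p}"
    and dec0: "\<forall>X\<in>locset scale p UNIV. \<exists>g\<in>G. \<exists>h\<in>H. X = loc_add scale p g h"
    using ds unfolding loc_direct_summand_def by (elim exE conjE)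
  have dec: "\<And>X. X \<in> locset scale p UNIV \<Longrightarrow> \<exists>g\<in>G. \<exists>h\<in>H. X = loc_add scale p g h"
    using dec0 by blast
  have Lr_in: "?Lr r v \<in> locset (*) p UNIV" if "v \<notin> p" for r v
    using that by (auto simp: module.locset_iff[OF module_times])
  have "\<forall>i<n. \<exists>yw. g i = ?L (fst yw) (snd yw) \<and> snd yw \<notin> p"
    using gl by (auto simp: locset_iff)
  then obtain yw' where yw': "\<And>i. i < n \<Longrightarrow> snd (yw' i) \<notin> p \<and> g i = ?L (fst (yw' i)) (snd (yw' i))"
    by metis
  have gG: "g i \<in> G" if i: "i < n" for i
  proof -
    have "loc_lsum scale p (\<lambda>j. ?Lr ((if j = i then 1 else 0) * snd (yw' j)) (snd (yw' i))) g n
        = ?L (\<Sum>j<n. (if j = i then 1 else 0) *s fst (yw' j)) (snd (yw' i))"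
      by (rule lsum_const[OF pr]) (use yw' i in auto)
    also have "\<dots> = g i" using yw'[OF i] i by (simp add: if_distrib[of "\<lambda>c. c *s _"] cong: if_cong)
    finally show ?thesis unfolding Gdef using Lr_in yw'[OF i] by blast
  qed
  have "\<forall>i<n. \<exists>yw. g i = ?L (fst yw) (snd yw) \<and> fst yw \<in> span S \<and> snd yw \<notin> p"
    using gG Gsub by (force simp: locset_iff)
  then obtain yw where yw: "\<And>i. i < n \<Longrightarrow> g i = ?L (fst (yw i)) (snd (yw i)) \<and> fst (yw i) \<in> span S \<and> snd (yw i) \<notin> p"
    by metis
  define y where "y i = fst (yw i)" for i
  define w where "w i = snd (yw i)" for i
  have gyw: "\<And>i. i < n \<Longrightarrow> w i \<notin> p \<and> g i = ?L (y i) (w i)" using yw by (simp add: y_def w_def)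
  have yS: "\<And>i. i < n \<Longrightarrow> y i \<in> span S" using yw by (simp add: y_def)
  have G1a: "?L (\<Sum>j<n. c j *s y j) u \<in> G" if u: "u \<notin> p" for c u
  proof -
    have "loc_lsum scale p (\<lambda>j. ?Lr (c j * w j) u) g n = ?L (\<Sum>j<n. c j *s y j) u"
      by (rule lsum_const[OF pr gyw u])
    then show ?thesis unfolding Gdef using Lr_in[OF u]
      by (intro CollectI exI[of _ "\<lambda>j. ?Lr (c j * w j) u"] conjI) simp_all
  qed
  have G1b: "\<exists>c u. u \<notin> p \<and> X = ?L (\<Sum>j<n. c j *s y j) u" if X: "X \<in> G" for X
  proof -
    obtain a where Xa: "X = loc_lsum scale p a g n" and a: "\<forall>i<n. a i \<in> locset (*) p UNIV"
      using X unfolding Gdef by blast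
    have "\<exists>c u. u \<notin> p \<and> loc_lsum scale p a g n = ?L (\<Sum>j<n. c j *s y j) u"
      by (rule lsum_repr[OF pr _ a]) (use gyw in auto)
    then show ?thesis unfolding Xa .
  qed
  have G2: "\<exists>t. t \<notin> p \<and> t * c i = 0" if z: "\<exists>t. t \<notin> p \<and> t *s (\<Sum>j<n. c j *s y j) = 0" and i: "i < n" for c i
  proof -
    have "loc_lsum scale p (\<lambda>j. ?Lr (c j * w j) 1) g n = ?L (\<Sum>j<n. c j *s y j) 1"
      by (rule lsum_const[OF pr gyw one])
    also have "\<dots> = loc_zero scale p" using z one Lzero by blast
    finally have "\<forall>i<n. ?Lr (c i * w i) 1 = loc_zero (*) p"
      using ind[of "\<lambda>j. ?Lr (c j * w j) 1"] Lr_in one by blast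
    then have "?Lr (c i * w i) 1 = ?Lr 0 1" using i by (simp add: loc_zero_def)
    then have "lrel (*) p (c i * w i) 1 0 1" using one by (simp add: module.L_eq[OF module_times pr])
    then obtain t where t: "t \<notin> p" "t * 1 * (c i * w i) = 0" unfolding lrel_def by auto
    have "t * w i \<notin> p" using t(1) gyw[OF i] by (simp add: pi_nmult[OF pr])
    moreover have "(t * w i) * c i = 0" using t(2) by (simp add: ac_simps)
    ultimately show ?thesis by blast
  qed
  have Hloc: "H \<subseteq> locset scale p UNIV" and H0: "loc_zero scale p \<in> H"
    and Hadd: "\<And>X Y. X \<in> H \<Longrightarrow> Y \<in> H \<Longrightarrow> loc_add scale p X Y \<in> H"
    and Hsm': "\<And>A X. A \<in> locset (*) p UNIV \<Longrightarrow> X \<in> H \<Longrightarrow> loc_smult scale p A X \<in> H"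
    using Hsm unfolding loc_submodule_def by blast+
  define K where "K = {m. ?L m 1 \<in> H}"
  have K1: "?L m u \<in> H \<longleftrightarrow> m \<in> K" if u: "u \<notin> p" for m u
  proof
    assume "?L m u \<in> H"
    then have "loc_smult scale p (?Lr u 1) (?L m u) \<in> H" using Hsm' Lr_in one by blast
    moreover have "loc_smult scale p (?Lr u 1) (?L m u) = ?L m 1"
      unfolding L_smult[OF pr u one] using u one
      by (subst L_eq[OF pr]) (auto simp: lrel_def intro!: exI[of _ 1])
    ultimately show "m \<in> K" unfolding K_def by simp
  next
    assume "m \<in> K"
    then have "loc_smult scale p (?Lr 1 u) (?L m 1) \<in> H" using Hsm' Lr_in u unfolding K_def by blast
    moreover have "loc_smult scale p (?Lr 1 u) (?L m 1) = ?L m u"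
      unfolding L_smult[OF pr one u] by simp
    ultimately show "?L m u \<in> H" by simp
  qed
  have K_add: "m + m' \<in> K" if "m \<in> K" "m' \<in> K" for m m'
  proof -
    have "loc_add scale p (?L m 1) (?L m' 1) \<in> H" using Hadd that unfolding K_def by blast
    then show ?thesis unfolding L_add[OF pr one one] K_def by simp
  qed
  have K_scale: "r *s m \<in> K" if "m \<in> K" for m r
  proof -
    have "loc_smult scale p (?Lr r 1) (?L m 1) \<in> H" using Hsm' Lr_in one that unfolding K_def by blast
    then show ?thesis unfolding L_smult[OF pr one one] K_def by simp
  qed
  have K_0: "0 \<in> K" using H0 unfolding K_def zero by simp
  have K_sum: "(\<Sum>v\<in>A. f v) \<in> K" if "\<And>v. v \<in> A \<Longrightarrow> f v \<in> K" for A f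
    using that by (induction A rule: infinite_finite_induct) (auto simp: K_0 K_add)
  have K_neg: "- m \<in> K" if "m \<in> K" for m
    using K_scale[OF that, of "-1"] by simp
  have D1: "\<exists>t. t \<notin> p \<and> t *s (\<Sum>j<n. c j *s y j) = 0" if "(\<Sum>j<n. c j *s y j) \<in> K" for c
  proof -
    have "?L (\<Sum>j<n. c j *s y j) 1 \<in> G \<inter> H" using G1a[OF one] that unfolding K_def by blast
    then have "?L (\<Sum>j<n. c j *s y j) 1 = loc_zero scale p" using GH by blast
    then show ?thesis using Lzero[OF one] by blast
  qed
  have D2: "\<exists>u c B. u \<notin> p \<and> B \<in> K \<and> u *s m = (\<Sum>j<n. c j *s y j) + B" for m
  proof -
    have "?L m 1 \<in> locset scale p UNIV" unfolding locset_iff using one by blast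
    then obtain g' h where g': "g' \<in> G" and h: "h \<in> H" and mgh: "?L m 1 = loc_add scale p g' h"
      using dec by blast
    obtain c u where u: "u \<notin> p" and g'e: "g' = ?L (\<Sum>j<n. c j *s y j) u" using G1b[OF g'] by blast
    have "h \<in> locset scale p UNIV" using h Hloc by blast
    then obtain B' w' where w': "w' \<notin> p" and he: "h = ?L B' w'" unfolding locset_iff by blast
    have B': "B' \<in> K" using K1[OF w'] h he by simp
    have uw: "u * w' \<notin> p" using u w' by (simp add: pi_nmult[OF pr])
    have "?L m 1 = ?L (w' *s (\<Sum>j<n. c j *s y j) + u *s B') (u * w')"
      using mgh unfolding g'e he L_add[OF pr u w'] .
    then have "lrel scale p m 1 (w' *s (\<Sum>j<n. c j *s y j) + u *s B') (u * w')"
      using one uw by (simp add: L_eq[OF pr])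
    then obtain t where t: "t \<notin> p" "(t * (u * w')) *s m = (t * 1) *s (w' *s (\<Sum>j<n. c j *s y j) + u *s B')"
      unfolding lrel_def by blast
    have "(t * (u * w')) *s m = (\<Sum>j<n. (t * w' * c j) *s y j) + (t * u) *s B'"
      unfolding t(2) by (simp add: scale_right_distrib scale_sum_right ac_simps)
    moreover have "t * (u * w') \<notin> p" using t(1) uw by (simp add: pi_nmult[OF pr])
    moreover have "(t * u) *s B' \<in> K" using K_scale[OF B'] .
    ultimately show ?thesis
      by (intro exI[of _ "t * (u * w')"] exI[of _ "\<lambda>j. t * w' * c j"] exI[of _ "(t * u) *s B'"]) simp
  qed
  have "\<forall>m. \<exists>u c B. u \<notin> p \<and> B \<in> K \<and> u *s m = (\<Sum>j<n. c j *s y j) + B" using D2 by blast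
  then obtain U C B where UCB: "\<And>m. U m \<notin> p \<and> B m \<in> K \<and> U m *s m = (\<Sum>j<n. C m j *s y j) + B m"
    by metis
  define Uall where "Uall = (\<Prod>v\<in>F. U v)"
  define Q where "Q v = (\<Prod>v'\<in>F-{v}. U v')" for v
  define \<rho> where "\<rho> v j = Q v * C v j" for v j
  define \<kappa> where "\<kappa> v = Q v *s B v" for v
  have Uall: "Uall \<notin> p" unfolding Uall_def using UCB by (intro pi_prod[OF pr F(1)]) auto
  have \<kappa>K: "\<kappa> v \<in> K" for v unfolding \<kappa>_def using UCB K_scale by blast
  have KAP: "Uall *s v = (\<Sum>j<n. \<rho> v j *s y j) + \<kappa> v" if v: "v \<in> F" for v
  proof -
    have "Uall = Q v * U v" unfolding Uall_def Q_def using F(1) v by (simp add: prod.remove ac_simps)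
    then have "Uall *s v = Q v *s (U v *s v)" by simp
    also have "\<dots> = (\<Sum>j<n. \<rho> v j *s y j) + \<kappa> v"
      using UCB[of v] by (simp add: \<rho>_def \<kappa>_def scale_right_distrib scale_sum_right)
    finally show ?thesis .
  qed
  have expand: "(\<Sum>j<n. (\<Sum>v\<in>F. c v * \<rho> v j) *s y j) = Uall *s (\<Sum>v\<in>F. c v *s v) - (\<Sum>v\<in>F. c v *s \<kappa> v)" for c
  proof -
    have "(\<Sum>j<n. (\<Sum>v\<in>F. c v * \<rho> v j) *s y j) = (\<Sum>v\<in>F. c v *s (\<Sum>j<n. \<rho> v j *s y j))"
      by (simp add: scale_sum_left scale_sum_right sum.swap[of _ "{..<n}"])
    also have "\<dots> = (\<Sum>v\<in>F. c v *s (Uall *s v - \<kappa> v))"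
      by (intro sum.cong refl) (simp add: KAP)
    also have "\<dots> = Uall *s (\<Sum>v\<in>F. c v *s v) - (\<Sum>v\<in>F. c v *s \<kappa> v)"
      by (simp add: scale_right_diff_distrib sum_subtractf scale_sum_right ac_simps)
    finally show ?thesis .
  qed
  have rel: "\<exists>t. t \<notin> p \<and> t * (\<Sum>v\<in>F. c v * \<rho> v j) = 0"
    if c: "(\<Sum>v\<in>F. c v *s v) = 0" and j: "j < n" for c j
  proof -
    have "(\<Sum>j<n. (\<Sum>v\<in>F. c v * \<rho> v j) *s y j) \<in> K"
      unfolding expand c by (simp, intro K_neg K_sum K_scale \<kappa>K)
    then show ?thesis using G2[OF D1[of "\<lambda>j. \<Sum>v\<in>F. c v * \<rho> v j"] j] by simp
  qed
  define Yset where "Yset j = {\<Sum>v\<in>F. c v * \<rho> v j | c. (\<Sum>v\<in>F. c v *s v) = 0}" for j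
  have exT: "\<exists>T. T \<notin> p \<and> (\<forall>z\<in>Yset j. T * z = 0)" if j: "j < n" for j
  proof (rule noeth_ann[OF N pr])
    fix z assume "z \<in> Yset j"
    then obtain c where z: "z = (\<Sum>v\<in>F. c v * \<rho> v j)" and c: "(\<Sum>v\<in>F. c v *s v) = 0"
      unfolding Yset_def by blast
    show "\<exists>t. t \<notin> p \<and> t * z = 0" unfolding z by (rule rel[OF c j])
  qed
  define TT where "TT j = (SOME T. T \<notin> p \<and> (\<forall>z\<in>Yset j. T * z = 0))" for j
  have TT: "TT j \<notin> p \<and> (\<forall>z\<in>Yset j. TT j * z = 0)" if j: "j < n" for j
    unfolding TT_def by (rule someI_ex[OF exT[OF j]])
  define T where "T = (\<Prod>j<n. TT j)"
  have T: "T \<notin> p" unfolding T_def using TT by (intro pi_prod[OF pr]) simp_all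
  have Tkill: "T * (\<Sum>v\<in>F. c v * \<rho> v j) = 0" if c: "(\<Sum>v\<in>F. c v *s v) = 0" and j: "j < n" for c j
  proof -
    have Teq: "T = TT j * (\<Prod>j'\<in>{..<n}-{j}. TT j')" unfolding T_def using j by (simp add: prod.remove)
    have "(\<Sum>v\<in>F. c v * \<rho> v j) \<in> Yset j" unfolding Yset_def using c by blast
    then have z: "TT j * (\<Sum>v\<in>F. c v * \<rho> v j) = 0" using TT[OF j] by blast
    have "T * (\<Sum>v\<in>F. c v * \<rho> v j) = (\<Prod>j'\<in>{..<n}-{j}. TT j') * (TT j * (\<Sum>v\<in>F. c v * \<rho> v j))"
      unfolding Teq by (simp only: mult.assoc mult.commute mult.left_commute)
    then show ?thesis unfolding z by simp
  qed
  have exc: "\<exists>c. m = (\<Sum>v\<in>F. c v *s v)" for m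
  proof -
    have "m \<in> span F" using F(2) by simp
    then show ?thesis unfolding span_finite[OF F(1)] by blast
  qed
  define cf where "cf m = (SOME c. m = (\<Sum>v\<in>F. c v *s v))" for m
  have cf: "m = (\<Sum>v\<in>F. cf m v *s v)" for m unfolding cf_def by (rule someI_ex[OF exc])
  have wd: "T * (\<Sum>v\<in>F. a v * \<rho> v j) = T * (\<Sum>v\<in>F. b v * \<rho> v j)"
    if ab: "(\<Sum>v\<in>F. a v *s v) = (\<Sum>v\<in>F. b v *s v)" and j: "j < n" for a b j
  proof -
    have "(\<Sum>v\<in>F. (a v - b v) *s v) = 0" using ab by (simp add: scale_left_diff_distrib sum_subtractf)
    then have "T * (\<Sum>v\<in>F. (a v - b v) * \<rho> v j) = 0" by (rule Tkill[of "\<lambda>v. a v - b v", OF _ j])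
    then show ?thesis by (simp add: left_diff_distrib sum_subtractf right_diff_distrib)
  qed
  define \<phi> where "\<phi> j m = T * (\<Sum>v\<in>F. cf m v * \<rho> v j)" for j m
  have \<phi>lin: "rlin scale (\<phi> j)" if j: "j < n" for j
    unfolding rlin_def
  proof (intro conjI allI)
    fix m m'
    have "(\<Sum>v\<in>F. cf (m + m') v *s v) = (\<Sum>v\<in>F. (cf m v + cf m' v) *s v)"
      by (simp add: scale_left_distrib sum.distrib cf[symmetric])
    from wd[OF this j] show "\<phi> j (m + m') = \<phi> j m + \<phi> j m'"
      unfolding \<phi>_def by (simp add: distrib_right sum.distrib distrib_left)
  next
    fix r m
    have "(\<Sum>v\<in>F. cf (r *s m) v *s v) = (\<Sum>v\<in>F. (r * cf m v) *s v)"
    proof -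
      have "(\<Sum>v\<in>F. (r * cf m v) *s v) = r *s (\<Sum>v\<in>F. cf m v *s v)" by (simp add: scale_sum_right)
      then show ?thesis by (simp only: cf[symmetric])
    qed
    from wd[OF this j] show "\<phi> j (r *s m) = r * \<phi> j m"
      unfolding \<phi>_def by (simp add: sum_distrib_left ac_simps)
  qed
  have exval: "\<exists>t. t \<notin> p \<and> t * \<phi> j (y i) = t * (T * (if j = i then Uall else 0))"
    if i: "i < n" and j: "j < n" for i j
  proof -
    let ?a = "cf (y i)"
    define e where "e j' = (\<Sum>v\<in>F. ?a v * \<rho> v j') - (if j' = i then Uall else 0)" for j'
    have s1: "(\<Sum>j'<n. e j' *s y j') = (\<Sum>j'<n. (\<Sum>v\<in>F. ?a v * \<rho> v j') *s y j') - (\<Sum>j'<n. (if j' = i then Uall else 0) *s y j')"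
      unfolding e_def by (simp add: scale_left_diff_distrib sum_subtractf)
    have s2: "(\<Sum>j'<n. (if j' = i then Uall else 0) *s y j') = Uall *s y i"
    proof -
      have "(\<Sum>j'<n. (if j' = i then Uall else 0) *s y j') = (\<Sum>j'<n. if j' = i then Uall *s y j' else 0)"
        by (intro sum.cong) auto
      then show ?thesis using i by (simp add: sum.delta)
    qed
    have s3: "(\<Sum>j'<n. (\<Sum>v\<in>F. ?a v * \<rho> v j') *s y j') = Uall *s y i - (\<Sum>v\<in>F. ?a v *s \<kappa> v)"
      unfolding expand by (simp only: cf[symmetric])
    have "(\<Sum>j'<n. e j' *s y j') = - (\<Sum>v\<in>F. ?a v *s \<kappa> v)" unfolding s1 s2 s3 by simp
    then have "(\<Sum>j'<n. e j' *s y j') \<in> K" by (simp, intro K_neg K_sum K_scale \<kappa>K)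
    then obtain t where t: "t \<notin> p" "t * e j = 0" using G2[OF D1[of e] j] by blast
    have "t * \<phi> j (y i) = T * (t * (\<Sum>v\<in>F. ?a v * \<rho> v j))" unfolding \<phi>_def by (simp only: ac_simps)
    also have "t * (\<Sum>v\<in>F. ?a v * \<rho> v j) = t * (if j = i then Uall else 0)"
      using t(2) unfolding e_def by (simp add: right_diff_distrib)
    finally have "t * \<phi> j (y i) = t * (T * (if j = i then Uall else 0))" by (simp only: ac_simps)
    then show ?thesis using t(1) by blast
  qed
  define tt where "tt i j = (SOME t. t \<notin> p \<and> t * \<phi> j (y i) = t * (T * (if j = i then Uall else 0)))" for i j
  have tt: "tt i j \<notin> p \<and> tt i j * \<phi> j (y i) = tt i j * (T * (if j = i then Uall else 0))"
    if "i < n" "j < n" for i j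
    unfolding tt_def by (rule someI_ex[OF exval[OF that]])
  define ts where "ts = (\<Prod>i<n. \<Prod>j<n. tt i j)"
  have ts: "ts \<notin> p" unfolding ts_def using tt by (intro pi_prod[OF pr]) simp_all
  have tsv: "ts * \<phi> j (y i) = ts * (T * (if j = i then Uall else 0))" if i: "i < n" and j: "j < n" for i j
  proof -
    have "ts = (\<Prod>j'<n. tt i j') * (\<Prod>i'\<in>{..<n}-{i}. \<Prod>j'<n. tt i' j')"
      unfolding ts_def by (rule prod.remove) (use i in auto)
    also have "(\<Prod>j'<n. tt i j') = tt i j * (\<Prod>j'\<in>{..<n}-{j}. tt i j')"
      by (rule prod.remove) (use j in auto)
    finally have e: "ts = tt i j * ((\<Prod>j'\<in>{..<n}-{j}. tt i j') * (\<Prod>i'\<in>{..<n}-{i}. \<Prod>j'<n. tt i' j'))"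
      by (simp only: ac_simps)
    define R where "R = (\<Prod>j'\<in>{..<n}-{j}. tt i j') * (\<Prod>i'\<in>{..<n}-{i}. \<Prod>j'<n. tt i' j')"
    have "ts * \<phi> j (y i) = R * (tt i j * \<phi> j (y i))" unfolding e R_def by (simp only: mult_ac)
    also have "\<dots> = R * (tt i j * (T * (if j = i then Uall else 0)))" by (simp only: conjunct2[OF tt[OF i j]])
    also have "\<dots> = ts * (T * (if j = i then Uall else 0))" unfolding e R_def by (simp only: mult_ac)
    finally show ?thesis .
  qed
  show ?thesis unfolding PP_def
  proof (intro exI[of _ y] exI[of _ "\<lambda>i m. ts * \<phi> i m"] exI[of _ "ts * T * Uall"] conjI allI impI)
    show "ts * T * Uall \<notin> p" using ts T Uall by (simp add: pi_nmult[OF pr])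
    show "y j \<in> span S" if "j < n" for j using yS that .
    show "rlin scale (\<lambda>m. ts * \<phi> i m)" if i: "i < n" for i
      using \<phi>lin[OF i] unfolding rlin_def by (simp add: distrib_left ac_simps)
    show "ts * \<phi> i (y j) = (if i = j then ts * T * Uall else 0)" if "i < n" "j < n" for i j
      using tsv[OF that(2) that(1)] by (auto simp: ac_simps)
  qed
qed
end

lemma rank_bound:
  fixes w v :: "'i \<Rightarrow> 'l \<Rightarrow> 'a::comm_ring_1"
  assumes pr: "prime_ideal p" and L: "finite L"
  shows "finite J \<Longrightarrow> s \<notin> p \<Longrightarrow>
    (\<forall>i\<in>J. \<forall>j\<in>J. (\<Sum>l\<in>L. w i l * v j l) - (if i = j then s else 0) \<in> p) \<Longrightarrow> card J \<le> card L"
  using L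
proof (induction L arbitrary: J v s rule: finite_induct)
  case empty
  show ?case
  proof (cases "J = {}")
    case False
    then obtain j where j: "j \<in> J" by blast
    then have "(\<Sum>l\<in>{}. w j l * v j l) - (if j = j then s else 0) \<in> p" using empty.prems(3) by blast
    then have "s \<in> p" using pi_uminus[OF pr, of "0 - s"] by simp
    then show ?thesis using empty.prems(2) by blast
  qed simp
next
  case (insert l0 L)
  note fin = insert.prems(1) and s = insert.prems(2) and H = insert.prems(3)
  let ?S = "\<lambda>i j. (\<Sum>l\<in>insert l0 L. w i l * v j l)"
  have Sins: "?S i j = w i l0 * v j l0 + (\<Sum>l\<in>L. w i l * v j l)" for i j
    using insert.hyps by simp
  show ?case
  proof (cases "\<exists>j0\<in>J. v j0 l0 \<notin> p")
    case True
    then obtain j0 where j0: "j0 \<in> J" "v j0 l0 \<notin> p" by blast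
    define \<beta> where "\<beta> = v j0 l0"
    define v' where "v' j l = \<beta> * v j l - v j l0 * v j0 l" for j l
    have "card (J - {j0}) \<le> card L"
    proof (rule insert.IH[of "J - {j0}" "\<beta> * s" v'])
      show "finite (J - {j0})" using fin by simp
      show "\<beta> * s \<notin> p" using j0 s by (simp add: \<beta>_def pi_nmult[OF pr])
      show "\<forall>i\<in>J - {j0}. \<forall>j\<in>J - {j0}. (\<Sum>l\<in>L. w i l * v' j l) - (if i = j then \<beta> * s else 0) \<in> p"
      proof (intro ballI)
        fix i j assume i: "i \<in> J - {j0}" and j: "j \<in> J - {j0}"
        have h1: "?S i j - (if i = j then s else 0) \<in> p" using H i j by blast
        have h2: "?S i j0 - (if i = j0 then s else 0) \<in> p" using H i j0 by blast
        have ij0: "i \<noteq> j0" using i by blast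
        have "(\<Sum>l\<in>L. w i l * v' j l) - (if i = j then \<beta> * s else 0)
           = \<beta> * (?S i j - (if i = j then s else 0)) - v j l0 * (?S i j0 - (if i = j0 then s else 0))"
          unfolding Sins v'_def using ij0
          by (simp add: right_diff_distrib sum_subtractf sum_distrib_left \<beta>_def algebra_simps)
        moreover have "\<beta> * (?S i j - (if i = j then s else 0)) - v j l0 * (?S i j0 - (if i = j0 then s else 0)) \<in> p"
          by (rule pi_diff[OF pr pi_mult[OF pr h1] pi_mult[OF pr h2]])
        ultimately show "(\<Sum>l\<in>L. w i l * v' j l) - (if i = j then \<beta> * s else 0) \<in> p" by simp
      qed
    qed
    moreover have "card J = Suc (card (J - {j0}))" using fin j0(1)
      by (metis card_Suc_Diff1)
    ultimately show ?thesis using insert.hyps by simp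
  next
    case False
    have "card J \<le> card L"
    proof (rule insert.IH[of J s v])
      show "finite J" by fact
      show "s \<notin> p" by fact
      show "\<forall>i\<in>J. \<forall>j\<in>J. (\<Sum>l\<in>L. w i l * v j l) - (if i = j then s else 0) \<in> p"
      proof (intro ballI)
        fix i j assume i: "i \<in> J" and j: "j \<in> J"
        have h1: "?S i j - (if i = j then s else 0) \<in> p" using H i j by blast
        have h2: "w i l0 * v j l0 \<in> p" using False j by (simp add: pi_mult[OF pr])
        have eq: "(\<Sum>l\<in>L. w i l * v j l) - (if i = j then s else 0) = (?S i j - (if i = j then s else 0)) - w i l0 * v j l0"
          unfolding Sins by simp
        show "(\<Sum>l\<in>L. w i l * v j l) - (if i = j then s else 0) \<in> p"
          unfolding eq by (rule pi_diff[OF pr h1 h2])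
      qed
    qed
    then show ?thesis using insert.hyps by simp
  qed
qed

context module
begin

lemma PP_bound:
  assumes pr: "prime_ideal p" and F: "finite F" "span F = UNIV" and P: "PP scale p S n"
  shows "n \<le> card F"
proof -
  obtain x f s where s: "s \<notin> p" 
    and fl: "\<And>i. i < n \<Longrightarrow> rlin scale (f i)"
    and fx: "\<And>i j. i < n \<Longrightarrow> j < n \<Longrightarrow> f i (x j) = (if i = j then s else 0)"
    using P unfolding PP_def by blast
  have "\<forall>j. \<exists>c. x j = (\<Sum>l\<in>F. c l *s l)"
  proof
    fix j
    have "x j \<in> span F" using F(2) by simp
    then show "\<exists>c. x j = (\<Sum>l\<in>F. c l *s l)" unfolding span_finite[OF F(1)] by blast
  qed
  then obtain c where c: "\<And>j. x j = (\<Sum>l\<in>F. c j l *s l)" by metis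
  have "card {..<n} \<le> card F"
  proof (rule rank_bound[OF pr F(1), of "{..<n}" s "\<lambda>i l. f i l" "\<lambda>j l. c j l"])
    show "finite {..<n}" by simp
    show "s \<notin> p" by fact
    show "\<forall>i\<in>{..<n}. \<forall>j\<in>{..<n}. (\<Sum>l\<in>F. f i l * c j l) - (if i = j then s else 0) \<in> p"
    proof (intro ballI)
      fix i j assume i: "i \<in> {..<n}" and j: "j \<in> {..<n}"
      have fi: "rlin scale (f i)" using fl i by simp
      have "f i (x j) = (\<Sum>l\<in>F. c j l * f i l)"
        unfolding c[of j] rlin_sum[OF fi] rlin_scale[OF fi] ..
      then have "(\<Sum>l\<in>F. f i l * c j l) - (if i = j then s else 0) = 0"
        using fx i j by (simp add: ac_simps)
      then show "(\<Sum>l\<in>F. f i l * c j l) - (if i = j then s else 0) \<in> p" using pi_0[OF pr] by simp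
    qed
  qed
  then show ?thesis by simp
qed

end

definition good :: "'a::comm_ring_1 set set \<Rightarrow> bool" where
  "good B \<longleftrightarrow> (\<exists>\<C>. finite \<C> \<and> (\<forall>C\<in>\<C>. C \<noteq> {} \<and> C \<subseteq> B \<and> prime_ideal (\<Inter>C)) \<and> B \<subseteq> \<Union>\<C>)"

lemma inter_ideal:
  assumes "B \<noteq> {}" "B \<subseteq> Spec" shows "ring_ideal (\<Inter>B)"
  using assms unfolding ring_ideal_def Spec_def prime_ideal_def by blast

lemma decomp:
  assumes N: "noetherian_ring TYPE('a::comm_ring_1)"
  shows "B \<noteq> {} \<Longrightarrow> B \<subseteq> (Spec :: 'a set set) \<Longrightarrow> good B"
proof (rule ccontr)
  assume B: "B \<noteq> {}" "B \<subseteq> Spec" and ng: "\<not> good B"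
  let ?I = "{\<Inter>B' | B'. B' \<noteq> {} \<and> B' \<subseteq> (Spec :: 'a set set) \<and> \<not> good B'}"
  have "\<exists>I\<in>?I. \<forall>J\<in>?I. I \<subseteq> J \<longrightarrow> J = I"
  proof (rule noeth_max[OF N])
    show "?I \<noteq> {}" using B ng by blast
    show "\<And>I. I \<in> ?I \<Longrightarrow> ring_ideal I" using inter_ideal by blast
  qed
  then obtain B0 where B0: "B0 \<noteq> {}" "B0 \<subseteq> Spec" "\<not> good B0"
    and mx: "\<forall>J\<in>?I. \<Inter>B0 \<subseteq> J \<longrightarrow> J = \<Inter>B0" by blast
  have pB0: "prime_ideal P" if "P \<in> B0" for P using that B0(2) unfolding Spec_def by blast
  have "\<not> prime_ideal (\<Inter>B0)"
  proof
    assume "prime_ideal (\<Inter>B0)"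
    then have "good B0" unfolding good_def using B0(1) by (intro exI[of _ "{B0}"]) auto
    then show False using B0(3) by blast
  qed
  moreover have "ring_ideal (\<Inter>B0)" using inter_ideal[OF B0(1,2)] .
  moreover have "1 \<notin> \<Inter>B0" using B0(1) pB0 pi_1 by blast
  ultimately obtain a b where ab: "a * b \<in> \<Inter>B0" "a \<notin> \<Inter>B0" "b \<notin> \<Inter>B0"
    unfolding prime_ideal_def by blast
  define Ba where "Ba = {P\<in>B0. a \<in> P}"
  define Bb where "Bb = {P\<in>B0. b \<in> P}"
  have cover: "B0 \<subseteq> Ba \<union> Bb"
  proof
    fix P assume P: "P \<in> B0"
    then have "a * b \<in> P" using ab(1) by blast
    then have "a \<in> P \<or> b \<in> P" using pB0[OF P] unfolding prime_ideal_def by blast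
    then show "P \<in> Ba \<union> Bb" using P unfolding Ba_def Bb_def by blast
  qed
  have goodsub: "good B'" if B': "B' \<subseteq> B0" "x \<in> \<Inter>B'" "x \<notin> \<Inter>B0" and ne: "B' \<noteq> {}" for B' x
  proof (rule ccontr)
    assume ngB': "\<not> good B'"
    have "\<Inter>B' \<in> ?I" using ne B'(1) B0(2) ngB' by blast
    moreover have "\<Inter>B0 \<subseteq> \<Inter>B'" using B'(1) by blast
    ultimately have "\<Inter>B' = \<Inter>B0" using mx by blast
    then show False using B' by blast
  qed
  have Bane: "Ba \<noteq> {}"
  proof
    assume "Ba = {}"
    then have "B0 \<subseteq> Bb" using cover by blast
    then have "b \<in> \<Inter>B0" unfolding Bb_def by blast
    then show False using ab by blast
  qed
  have Bbne: "Bb \<noteq> {}"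
  proof
    assume "Bb = {}"
    then have "B0 \<subseteq> Ba" using cover by blast
    then have "a \<in> \<Inter>B0" unfolding Ba_def by blast
    then show False using ab by blast
  qed
  have gBa: "good Ba" by (rule goodsub[of Ba a]) (use ab Bane in \<open>auto simp: Ba_def\<close>)
  have gBb: "good Bb" by (rule goodsub[of Bb b]) (use ab Bbne in \<open>auto simp: Bb_def\<close>)
  obtain Ca where Ca: "finite Ca" "\<forall>C\<in>Ca. C \<noteq> {} \<and> C \<subseteq> Ba \<and> prime_ideal (\<Inter>C)" "Ba \<subseteq> \<Union>Ca"
    using gBa unfolding good_def by blast
  obtain Cb where Cb: "finite Cb" "\<forall>C\<in>Cb. C \<noteq> {} \<and> C \<subseteq> Bb \<and> prime_ideal (\<Inter>C)" "Bb \<subseteq> \<Union>Cb"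
    using gBb unfolding good_def by blast
  have "good B0" unfolding good_def
  proof (intro exI[of _ "Ca \<union> Cb"] conjI)
    show "finite (Ca \<union> Cb)" using Ca Cb by simp
    show "\<forall>C\<in>Ca \<union> Cb. C \<noteq> {} \<and> C \<subseteq> B0 \<and> prime_ideal (\<Inter>C)"
      using Ca(2) Cb(2) unfolding Ba_def Bb_def by blast
    show "B0 \<subseteq> \<Union>(Ca \<union> Cb)" using cover Ca(3) Cb(3) by blast
  qed
  then show False using B0(3) by blast
qed

theorem lemma3p6:
  fixes scale :: "'a::comm_ring_1 \<Rightarrow> 'm::ab_group_add \<Rightarrow> 'm"
    and X :: "'a set set" and S :: "'m set"
  assumes "noetherian_ring TYPE('a)"
    and "module scale"
    and "finitely_generated scale"
    and "basic X"
  shows "\<exists>\<Lambda>. finite \<Lambda> \<and> \<Lambda> \<subseteq> X \<and>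
           (\<forall>p \<in> X - \<Lambda>. \<exists>q \<in> \<Lambda>. q \<subset> p \<and> delta scale p S = delta scale q S)"
proof -
  note N = assms(1) and M = assms(2)
  obtain F where F: "finite F" "module.span scale F = UNIV"
    using assms(3) unfolding finitely_generated_def by blast
  have XS: "X \<subseteq> Spec" and XB: "\<And>C. C \<subseteq> X \<Longrightarrow> C \<noteq> {} \<Longrightarrow> prime_ideal (\<Inter>C) \<Longrightarrow> \<Inter>C \<in> X"
    using assms(4) unfolding basic_def by blast+
  have pX: "prime_ideal p" if "p \<in> X" for p using XS that unfolding Spec_def by blast
  have EEPP: "EE scale p S n \<longleftrightarrow> PP scale p S n" if pr: "prime_ideal p" for p n
    using module.PP_EE[OF M pr] module.EE_PP[OF M N pr F] by blast
  have PP0: "PP scale p S 0" if pr: "prime_ideal p" for p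
    unfolding PP_def using pi_1[OF pr] by (intro exI[of _ "\<lambda>_. 0"] exI[of _ "\<lambda>_ _. 0"] exI[of _ 1]) simp
  have bnd: "n \<le> card F" if pr: "prime_ideal p" and P: "PP scale p S n" for p n
    using module.PP_bound[OF M pr F P] .
  define d where "d p = delta scale p S" for p
  have dG: "d p = (GREATEST n. PP scale p S n)" if pr: "prime_ideal p" for p
  proof -
    have "d p = (GREATEST n. EE scale p S n)" unfolding d_def delta_def EE_def ..
    also have "\<dots> = (GREATEST n. PP scale p S n)" using EEPP[OF pr] by simp
    finally show ?thesis .
  qed
  have dPP: "PP scale p S (d p)" if pr: "prime_ideal p" for p
    unfolding dG[OF pr] by (rule GreatestI_nat[where P="\<lambda>n. PP scale p S n", OF PP0[OF pr] bnd[OF pr]])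
  have dge: "n \<le> d p" if pr: "prime_ideal p" and P: "PP scale p S n" for p n
    unfolding dG[OF pr] by (rule Greatest_le_nat[where P="\<lambda>n. PP scale p S n", OF P bnd[OF pr]])
  have dbnd: "d p \<le> card F" if pr: "prime_ideal p" for p using bnd[OF pr dPP[OF pr]] .
  have PPtr: "\<exists>s. s \<notin> q \<and> (\<forall>p. s \<notin> p \<longrightarrow> PP scale p S n)" if P: "PP scale q S n" for q n
    using P unfolding PP_def by blast
  have mono: "d p \<le> d q" if q: "prime_ideal q" and p: "prime_ideal p" and qp: "q \<subseteq> p" for p q
  proof -
    obtain s where "s \<notin> p" "\<forall>p'. s \<notin> p' \<longrightarrow> PP scale p' S (d p)" using PPtr[OF dPP[OF p]] by blast
    then have "PP scale q S (d p)" using qp by blast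
    then show ?thesis by (rule dge[OF q])
  qed
  define B where "B n = {p\<in>X. d p = n}" for n
  have gB: "good (B n)" if "B n \<noteq> {}" for n
    by (rule decomp[OF N that]) (use XS in \<open>auto simp: B_def\<close>)
  define CC where "CC n = (if B n = {} then {} else (SOME \<C>. finite \<C> \<and> (\<forall>C\<in>\<C>. C \<noteq> {} \<and> C \<subseteq> B n \<and> prime_ideal (\<Inter>C)) \<and> B n \<subseteq> \<Union>\<C>))" for n
  have CC: "finite (CC n) \<and> (\<forall>C\<in>CC n. C \<noteq> {} \<and> C \<subseteq> B n \<and> prime_ideal (\<Inter>C)) \<and> B n \<subseteq> \<Union>(CC n)" for n
  proof (cases "B n = {}")
    case True then show ?thesis by (simp add: CC_def)
  next
    case False
    then show ?thesis unfolding CC_def using gB[OF False] unfolding good_def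
      by (simp only: if_False) (rule someI_ex)
  qed
  define \<Lambda> where "\<Lambda> = (\<Union>n\<in>{..card F}. Inter ` CC n)"
  show ?thesis
  proof (intro exI[of _ \<Lambda>] conjI ballI)
    show "finite \<Lambda>" unfolding \<Lambda>_def using CC by auto
    show "\<Lambda> \<subseteq> X"
    proof
      fix q assume "q \<in> \<Lambda>"
      then obtain n C where C: "C \<in> CC n" and q: "q = \<Inter>C" unfolding \<Lambda>_def by blast
      have "C \<noteq> {}" "C \<subseteq> B n" "prime_ideal (\<Inter>C)" using CC C by blast+
      then show "q \<in> X" unfolding q using XB unfolding B_def by blast
    qed
  next
    fix p assume p: "p \<in> X - \<Lambda>"
    have pr: "prime_ideal p" using p pX by blast
    define n where "n = d p"
    have nk: "n \<le> card F" unfolding n_def by (rule dbnd[OF pr])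
    have "p \<in> B n" unfolding B_def n_def using p by blast
    then obtain C where C: "C \<in> CC n" "p \<in> C" using CC by blast
    have Cp: "C \<noteq> {}" "C \<subseteq> B n" "prime_ideal (\<Inter>C)" using CC C(1) by blast+
    define q where "q = \<Inter>C"
    have qL: "q \<in> \<Lambda>" unfolding \<Lambda>_def q_def using C(1) nk by blast
    have qp: "q \<subseteq> p" unfolding q_def using C(2) by blast
    have "q \<noteq> p" using qL p by blast
    then have qsp: "q \<subset> p" using qp by blast
    have qpr: "prime_ideal q" unfolding q_def by (rule Cp(3))
    have ge: "d p \<le> d q" by (rule mono[OF qpr pr qp])
    have le: "d q \<le> n"
    proof -
      obtain s where s: "s \<notin> q" "\<forall>p'. s \<notin> p' \<longrightarrow> PP scale p' S (d q)" using PPtr[OF dPP[OF qpr]] by blast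
      then obtain p' where p': "p' \<in> C" "s \<notin> p'" unfolding q_def by blast
      have p'B: "p' \<in> B n" using p'(1) Cp(2) by blast
      then have p'X: "p' \<in> X" and dp': "d p' = n" unfolding B_def by blast+
      have "PP scale p' S (d q)" using s p' by blast
      then have "d q \<le> d p'" by (rule dge[OF pX[OF p'X]])
      then show ?thesis using dp' by simp
    qed
    have "d p = d q" using ge le unfolding n_def by simp
    then show "\<exists>q\<in>\<Lambda>. q \<subset> p \<and> delta scale p S = delta scale q S"
      using qL qsp unfolding d_def by blast
  qed
qed

end
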